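(* Let $Y$ be a Peano continuum without cut points. For any point $x\in Y$ and any $\epsilon>0$ there is $\delta>0$ such that $Y\setminus B(x,\epsilon)$ is contained in a single component of $Y\setminus B(x,\delta)$.
   Context: A Peano continuum is a compact, connected, locally connected metric space; $B(x,r)$ denotes the open metric ball of radius $r$ about $x$. *)

theory Defs
  imports "HOL-Analysis.Analysis"
begin

definition peano_continuum :: "'a::metric_space set \<Rightarrow> bool" where
  "peano_continuum Y \<longleftrightarrow> compact Y \<and> connected Y \<and> locally connected Y"

definition cut_point :: "'a::topological_space set \<Rightarrow> 'a \<Rightarrow> bool" where
  "cut_point Y p \<longleftrightarrow> p \<in> Y \<and> \<not> connected (Y - {p})"

end

theory Submission
  imports Defs
begin

theorem lemma4p4:
  fixes Y :: "'a::metric_space set" and x :: 'a and \<epsilon> :: real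
  assumes "peano_continuum Y"
    and "\<And>p. \<not> cut_point Y p"
    and "x \<in> Y"
    and "\<epsilon> > 0"
  shows "\<exists>\<delta>>0. Y - ball x \<epsilon> = {} \<or>
           (\<exists>C\<in>components (Y - ball x \<delta>). Y - ball x \<epsilon> \<subseteq> C)"
proof (cases "Y - ball x \<epsilon> = {}")
  case True
  then show ?thesis using assms(4) by blast
next
  case False
  then obtain k0 where k0: "k0 \<in> Y - ball x \<epsilon>" by blast
  have cpt: "compact Y" and lc: "locally connected Y"
    using assms(1) unfolding peano_continuum_def by auto
  have conn: "connected (Y - {x})"
    using assms(2)[of x] assms(3) unfolding cut_point_def by auto
  have opn: "\<And>d. openin (top_of_set Y) (Y - cball x d)"
  proof -
    fix d
    have "Y - cball x d = Y \<inter> (- cball x d)" by auto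
    moreover have "open (- cball x d)" by auto
    ultimately show "openin (top_of_set Y) (Y - cball x d)"
      by (metis openin_open_Int)
  qed
  have copn: "\<And>d a. a \<in> Y - cball x d \<Longrightarrow>
      openin (top_of_set Y) (connected_component_set (Y - cball x d) a)"
    using lc opn unfolding locally_connected_open_connected_component by blast
  define U where "U = {a \<in> Y - {x}. \<exists>d>0. connected_component (Y - cball x d) k0 a}"
  have transfer: "a \<in> U \<longleftrightarrow> b \<in> U" if cc: "connected_component (Y - cball x d) a b" and d: "d > 0"
    for a b d
  proof -
    have ab: "a \<in> Y - {x}" "b \<in> Y - {x}" using connected_component_in[OF cc] d by auto
    have step: "q \<in> U" if "p \<in> U" "connected_component (Y - cball x d) p q"
        "q \<in> Y - {x}" for p q
    proof -
      from that(1) obtain d' where d': "d' > 0" "connected_component (Y - cball x d') k0 p"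
        unfolding U_def by auto
      define e where "e = min d d'"
      have sub1: "Y - cball x d' \<subseteq> Y - cball x e" and sub2: "Y - cball x d \<subseteq> Y - cball x e"
        unfolding e_def by auto
      have "connected_component (Y - cball x e) k0 q"
        by (meson connected_component_of_subset connected_component_trans d'(2) sub1 sub2 that(2))
      moreover have "e > 0" using d d' unfolding e_def by auto
      ultimately show ?thesis using that(3) unfolding U_def by auto
    qed
    show ?thesis using step[OF _ cc ab(2)] step[OF _ connected_component_sym[OF cc] ab(1)] by blast
  qed
  have loc: "\<exists>T. openin (top_of_set (Y - {x})) T \<and> a \<in> T \<and> (\<forall>b\<in>T. a \<in> U \<longleftrightarrow> b \<in> U)"
    if a: "a \<in> Y - {x}" for a
  proof -
    define d where "d = dist a x / 2"
    have d0: "d > 0" using a unfolding d_def by auto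
    have aY: "a \<in> Y - cball x d" using a d0 unfolding d_def by (auto simp: dist_commute)
    define T where "T = connected_component_set (Y - cball x d) a"
    have "openin (top_of_set Y) T" unfolding T_def using copn[OF aY] .
    moreover have "T \<subseteq> Y - {x}" unfolding T_def using d0
      using connected_component_subset[of "Y - cball x d" a] d0 by auto
    ultimately have "openin (top_of_set (Y - {x})) T"
      by (meson Diff_subset openin_subset_trans)
    moreover have "a \<in> T" unfolding T_def using aY by (simp add: connected_component_refl)
    moreover have "\<forall>b\<in>T. a \<in> U \<longleftrightarrow> b \<in> U" unfolding T_def using transfer d0
      by (simp add: mem_Collect_eq)
    ultimately show ?thesis by blast
  qed
  have Usub: "U \<subseteq> Y - {x}" unfolding U_def by auto
  have o1: "openin (top_of_set (Y - {x})) U"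
  proof (subst openin_subopen, intro ballI)
    fix a assume "a \<in> U"
    then obtain T where "openin (top_of_set (Y - {x})) T" "a \<in> T" "\<forall>b\<in>T. a \<in> U \<longleftrightarrow> b \<in> U"
      using loc Usub by blast
    then show "\<exists>T. openin (top_of_set (Y - {x})) T \<and> a \<in> T \<and> T \<subseteq> U"
      using \<open>a \<in> U\<close> by blast
  qed
  have o2: "openin (top_of_set (Y - {x})) ((Y - {x}) - U)"
  proof (subst openin_subopen, intro ballI)
    fix a assume a: "a \<in> (Y - {x}) - U"
    then obtain T where T: "openin (top_of_set (Y - {x})) T" "a \<in> T" "\<forall>b\<in>T. a \<in> U \<longleftrightarrow> b \<in> U"
      using loc by blast
    have "T \<subseteq> Y - {x}" using openin_imp_subset[OF T(1)] .
    then show "\<exists>T. openin (top_of_set (Y - {x})) T \<and> a \<in> T \<and> T \<subseteq> (Y - {x}) - U"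
      using T a by blast
  qed
  have k0x: "dist x k0 \<ge> \<epsilon>" using k0 by auto
  have "k0 \<in> U"
  proof -
    have "k0 \<in> Y - cball x (\<epsilon>/2)" using k0x k0 assms(4) by auto
    then show ?thesis using k0 k0x assms(4) unfolding U_def
      by (auto intro!: exI[of _ "\<epsilon>/2"] connected_component_refl)
  qed
  then have allU: "Y - {x} \<subseteq> U"
    using conn o1 o2 unfolding connected_openin by blast
  define A where "A d = connected_component_set (Y - cball x d) k0" for d
  have "\<forall>d. \<exists>T. open T \<and> A d = Y \<inter> T"
  proof
    fix d
    show "\<exists>T. open T \<and> A d = Y \<inter> T"
    proof (cases "k0 \<in> Y - cball x d")
      case True
      then show ?thesis using copn[OF True] unfolding A_def openin_open by blast
    next
      case False
      then have "A d = {}" unfolding A_def using connected_component_eq_empty by metis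
      then show ?thesis by (intro exI[of _ "{}"]) auto
    qed
  qed
  then obtain T where T: "\<And>d. open (T d)" "\<And>d. A d = Y \<inter> T d" by metis
  have Kc: "compact (Y - ball x \<epsilon>)"
    using cpt by (simp add: compact_diff)
  have cov: "Y - ball x \<epsilon> \<subseteq> (\<Union>d\<in>{0<..}. T d)"
  proof
    fix k assume k: "k \<in> Y - ball x \<epsilon>"
    then have "k \<in> Y - {x}" using assms(4) by auto
    then obtain d where "d > 0" "connected_component (Y - cball x d) k0 k"
      using allU unfolding U_def by auto
    then have "k \<in> A d" unfolding A_def by auto
    then show "k \<in> (\<Union>d\<in>{0<..}. T d)" using T(2) \<open>d > 0\<close> by auto
  qed
  obtain D where D: "D \<subseteq> {0<..}" "finite D" "Y - ball x \<epsilon> \<subseteq> (\<Union>d\<in>D. T d)"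
    using compactE_image[OF Kc T(1) cov] by metis
  have Dne: "D \<noteq> {}" using D(3) k0 by auto
  define \<delta> where "\<delta> = Min D"
  have \<delta>0: "\<delta> > 0" unfolding \<delta>_def using D Dne by auto
  have Ksub: "Y - ball x \<epsilon> \<subseteq> A \<delta>"
  proof
    fix k assume k: "k \<in> Y - ball x \<epsilon>"
    then obtain d where d: "d \<in> D" "k \<in> T d" using D(3) by auto
    then have "k \<in> A d" using T(2) k by auto
    moreover have "\<delta> \<le> d" unfolding \<delta>_def using d D(2) by auto
    then have "Y - cball x d \<subseteq> Y - cball x \<delta>" by auto
    ultimately show "k \<in> A \<delta>" unfolding A_def
      using connected_component_of_subset[of "Y - cball x d" k0 k "Y - cball x \<delta>"] by simp
  qed
  have "A \<delta> \<subseteq> connected_component_set (Y - ball x \<delta>) k0"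
    unfolding A_def by (intro connected_component_mono) auto
  moreover have "k0 \<in> A \<delta>" using Ksub k0 by blast
  then have "connected_component (Y - cball x \<delta>) k0 k0" unfolding A_def by (simp only: mem_Collect_eq)
  then have "k0 \<in> Y - cball x \<delta>" by (rule conjunct1[OF connected_component_in])
  then have "k0 \<in> Y - ball x \<delta>" by auto
  then have "connected_component_set (Y - ball x \<delta>) k0 \<in> components (Y - ball x \<delta>)"
    by (rule componentsI)
  ultimately show ?thesis using Ksub \<delta>0 by blast
qed

end
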